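(* Let $\alpha,\beta\in\mathbb{N}\cup\{0\}$ and $1_F\in\mathbb{N}$, and let $n_F=[x^n]\,\frac{1_F\,x}{(1-\alpha x)(1-\beta x)}$ for $n\ge0$. Let $(b_1,\dots,b_k)$ be a composition of $n\in\mathbb{N}$ into $k$ positive parts. Then $$n_F=\Big(\sum_{s=1}^k b_s\Big)_F=\sum_{s=1}^k \alpha^{\,b_{s+1}+\cdots+b_k}\,\beta^{\,b_1+\cdots+b_{s-1}}\,(b_s)_F .$$
   Context: $[x^n]$ denotes the coefficient of $x^n$ in the power series expansion. Empty sums in exponents equal $0$, and $0^0=1$. *)

theory Defs
  imports "HOL-Computational_Algebra.Formal_Power_Series"
begin

definition fnumber :: "nat \<Rightarrow> nat \<Rightarrow> nat \<Rightarrow> nat \<Rightarrow> real" where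
  "fnumber \<alpha> \<beta> oneF n =
     fps_nth (fps_const (real oneF) * fps_X /
              ((1 - fps_const (real \<alpha>) * fps_X) * (1 - fps_const (real \<beta>) * fps_X))) n"

end

theory Submission
  imports Defs
begin

lemma gp_inv: "inverse (1 - fps_const (a::real) * fps_X) = Abs_fps (\<lambda>n. a ^ n)"
proof -
  have "Abs_fps (\<lambda>n. a ^ n) * (1 - fps_const a * fps_X) = 1"
  proof (rule fps_ext)
    fix n
    have e: "Abs_fps (\<lambda>n. a ^ n) * (1 - fps_const a * fps_X)
      = Abs_fps (\<lambda>n. a ^ n) - fps_const a * (fps_X * Abs_fps (\<lambda>n. a ^ n))"
      by (simp add: algebra_simps)
    show "fps_nth (Abs_fps (\<lambda>n. a ^ n) * (1 - fps_const a * fps_X)) n = fps_nth 1 n"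
      unfolding e by (cases n) auto
  qed
  thus ?thesis
    by (intro fps_inverse_unique) (simp add: mult.commute)
qed

definition hh :: "real \<Rightarrow> real \<Rightarrow> nat \<Rightarrow> real" where
  "hh a b n = (\<Sum>i=0..n. a ^ i * b ^ (n - i))"

lemma fnumber_closed:
  "fnumber \<alpha> \<beta> c n = (if n = 0 then 0 else real c * hh \<alpha> \<beta> (n - 1))"
proof -
  have d: "fps_nth ((1 - fps_const (real \<alpha>) * fps_X) * (1 - fps_const (real \<beta>) * fps_X)) 0 \<noteq> 0"
    by simp
  have "fps_const (real c) * fps_X /
              ((1 - fps_const (real \<alpha>) * fps_X) * (1 - fps_const (real \<beta>) * fps_X))
     = fps_const (real c) * (fps_X * (Abs_fps (\<lambda>n. real \<alpha> ^ n) * Abs_fps (\<lambda>n. real \<beta> ^ n)))"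
    by (simp add: fps_divide_unit[OF d] fps_inverse_mult gp_inv mult.assoc)
  thus ?thesis
    unfolding fnumber_def by (cases n) (simp_all add: hh_def fps_mult_left_const_nth fps_X_mult_nth, simp add: fps_mult_nth)
qed

lemma hh_add: "hh a b (m + n + 1) = b ^ (n + 1) * hh a b m + a ^ (m + 1) * hh a b n"
proof -
  have "hh a b (m + n + 1) = (\<Sum>i=0..m. a ^ i * b ^ (m + n + 1 - i))
      + (\<Sum>i=Suc m..m + n + 1. a ^ i * b ^ (m + n + 1 - i))"
    unfolding hh_def using sum.ub_add_nat[of 0 m "\<lambda>i. a ^ i * b ^ (m + n + 1 - i)" "n+1"] by (simp add: add.assoc)
  also have "(\<Sum>i=0..m. a ^ i * b ^ (m + n + 1 - i)) = b ^ (n + 1) * hh a b m"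
    unfolding hh_def sum_distrib_left
    by (rule sum.cong) (auto simp: power_add[symmetric] Suc_diff_le add.commute)
  also have "(\<Sum>i=Suc m..m + n + 1. a ^ i * b ^ (m + n + 1 - i))
      = (\<Sum>j=0..n. a ^ (j + Suc m) * b ^ (m + n + 1 - (j + Suc m)))"
    using sum.shift_bounds_cl_nat_ivl[of "\<lambda>i. a ^ i * b ^ (m + n + 1 - i)" 0 "Suc m" n] by (simp add: add.commute)
  also have "\<dots> = a ^ (m + 1) * hh a b n"
    unfolding hh_def sum_distrib_left
    by (rule sum.cong) (auto simp: power_add)
  finally show ?thesis .
qed

lemma f_add: "fnumber \<alpha> \<beta> c (m + n) = real \<beta> ^ n * fnumber \<alpha> \<beta> c m + real \<alpha> ^ m * fnumber \<alpha> \<beta> c n"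
proof (cases "m = 0 \<or> n = 0")
  case True thus ?thesis by (auto simp: fnumber_closed)
next
  case False
  then obtain m' n' where "m = Suc m'" "n = Suc n'" by (meson not0_implies_Suc)
  thus ?thesis using hh_add[of "real \<alpha>" "real \<beta>" m' n']
    by (simp add: fnumber_closed algebra_simps)
qed

lemma f_list: "fnumber \<alpha> \<beta> c (sum_list bs) =
         (\<Sum>s<length bs. real \<alpha> ^ sum_list (drop (Suc s) bs)
                         * real \<beta> ^ sum_list (take s bs)
                         * fnumber \<alpha> \<beta> c (bs ! s))"
proof (induction bs)
  case Nil thus ?case by (simp add: fnumber_closed)
next
  case (Cons b bs)
  have "fnumber \<alpha> \<beta> c (sum_list (b # bs)) = fnumber \<alpha> \<beta> c (sum_list bs + b)" by (simp add: add.commute)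
  also have "\<dots> = real \<beta> ^ b * fnumber \<alpha> \<beta> c (sum_list bs) + real \<alpha> ^ sum_list bs * fnumber \<alpha> \<beta> c b"
    by (rule f_add)
  finally show ?case
    by (simp add: Cons.IH lessThan_Suc_eq_insert_0 sum.reindex sum_distrib_left algebra_simps power_add)
qed

theorem proposition1:
  fixes \<alpha> \<beta> oneF n :: nat and bs :: "nat list"
  assumes "oneF \<ge> 1"
    and "n \<ge> 1"
    and "\<forall>b\<in>set bs. b > 0"
    and "sum_list bs = n"
  shows "fnumber \<alpha> \<beta> oneF n = fnumber \<alpha> \<beta> oneF (sum_list bs)
       \<and> fnumber \<alpha> \<beta> oneF (sum_list bs) =
         (\<Sum>s<length bs. real \<alpha> ^ sum_list (drop (Suc s) bs)
                         * real \<beta> ^ sum_list (take s bs)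
                         * fnumber \<alpha> \<beta> oneF (bs ! s))"
  using assms(4) f_list[of \<alpha> \<beta> oneF bs] by simp

end
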